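(* Let $G=(V,E)$ be a finite simple graph on $n$ vertices with no isolated vertex. Let $\mathcal{A}$ be the set of all graphs $G'$ with vertex set $V$ that can be obtained as follows: for each vertex $v\in V$, if $\deg_G(v)\ge 2$, choose two distinct neighbors $u,w$ of $v$ in $G$ and put the edge $uw$ into $G'$; if $\deg_G(v)=1$, put a loop on the unique neighbor of $v$ into $G'$ (an edge already present is not duplicated). Let $G'_{\min}\in\mathcal{A}$ minimize $n-\alpha(G')$ over $G'\in\mathcal{A}$. Then $$\gamma_t(G)=n-\alpha(G'_{\min})=\beta(G'_{\min}).$$
   Context: A set $S\subseteq V$ is a total dominating set of $G$ if every vertex $v\in V$ has a neighbor in $S$; $\gamma_t(G)$ is the minimum size of a total dominating set of $G$. For a graph $H$ possibly with loops, an independent set is a set of vertices containing no two endpoints of an edge and no vertex carrying a loop, and $\alpha(H)$ is the maximum size of an independent set; a vertex cover is a set of vertices meeting every edge (so it contains every vertex carrying a loop), and $\beta(H)$ is the minimum size of a vertex cover. *)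

theory Defs
  imports Main
begin

definition simple_graph :: "'a set \<Rightarrow> ('a \<Rightarrow> 'a \<Rightarrow> bool) \<Rightarrow> bool" where
  "simple_graph V E \<longleftrightarrow> finite V \<and> (\<forall>u v. E u v \<longrightarrow> u \<in> V \<and> v \<in> V)
     \<and> (\<forall>u v. E u v \<longrightarrow> E v u) \<and> (\<forall>v. \<not> E v v)"

definition nbhd :: "('a \<Rightarrow> 'a \<Rightarrow> bool) \<Rightarrow> 'a \<Rightarrow> 'a set" where
  "nbhd E v = {u. E v u}"

definition deg :: "('a \<Rightarrow> 'a \<Rightarrow> bool) \<Rightarrow> 'a \<Rightarrow> nat" where
  "deg E v = card (nbhd E v)"

definition total_dominating_set :: "'a set \<Rightarrow> ('a \<Rightarrow> 'a \<Rightarrow> bool) \<Rightarrow> 'a set \<Rightarrow> bool" where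
  "total_dominating_set V E S \<longleftrightarrow> S \<subseteq> V \<and> (\<forall>v\<in>V. \<exists>u\<in>S. E v u)"

definition gamma_t :: "'a set \<Rightarrow> ('a \<Rightarrow> 'a \<Rightarrow> bool) \<Rightarrow> nat" where
  "gamma_t V E = Min {card S | S. total_dominating_set V E S}"

(* Graph H possibly with loops, on vertex set V, given by its edge set F:
   an edge {u,w} (u \<noteq> w) is an ordinary edge, a singleton {u} is a loop on u. *)
definition independent_set :: "'a set \<Rightarrow> 'a set set \<Rightarrow> 'a set \<Rightarrow> bool" where
  "independent_set V F I \<longleftrightarrow> I \<subseteq> V \<and> (\<forall>e\<in>F. \<not> e \<subseteq> I)"

definition vertex_cover :: "'a set \<Rightarrow> 'a set set \<Rightarrow> 'a set \<Rightarrow> bool" where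
  "vertex_cover V F C \<longleftrightarrow> C \<subseteq> V \<and> (\<forall>e\<in>F. e \<inter> C \<noteq> {})"

definition alpha :: "'a set \<Rightarrow> 'a set set \<Rightarrow> nat" where
  "alpha V F = Max {card I | I. independent_set V F I}"

definition beta :: "'a set \<Rightarrow> 'a set set \<Rightarrow> nat" where
  "beta V F = Min {card C | C. vertex_cover V F C}"

definition derived_graphs :: "'a set \<Rightarrow> ('a \<Rightarrow> 'a \<Rightarrow> bool) \<Rightarrow> 'a set set set" where
  "derived_graphs V E = {F. \<exists>f.
     (\<forall>v\<in>V. deg E v \<ge> 2 \<longrightarrow> (\<exists>u w. u \<noteq> w \<and> E v u \<and> E v w \<and> f v = {u, w}))
   \<and> (\<forall>v\<in>V. deg E v = 1 \<longrightarrow> (\<exists>u. nbhd E v = {u} \<and> f v = {u}))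
   \<and> F = f ` V}"

end

theory Submission
  imports Defs
begin

lemma derived_props:
  assumes sg: "simple_graph V E" and nz: "\<forall>v\<in>V. \<exists>u. E v u"
    and F: "F \<in> derived_graphs V E"
  shows "\<exists>f. F = f ` V \<and> (\<forall>v\<in>V. f v \<subseteq> nbhd E v \<and> f v \<noteq> {})"
proof -
  obtain f where f1: "\<forall>v\<in>V. deg E v \<ge> 2 \<longrightarrow> (\<exists>u w. u \<noteq> w \<and> E v u \<and> E v w \<and> f v = {u, w})"
    and f2: "\<forall>v\<in>V. deg E v = 1 \<longrightarrow> (\<exists>u. nbhd E v = {u} \<and> f v = {u})"
    and f3: "F = f ` V"
    using F unfolding derived_graphs_def by blast
  have "\<forall>v\<in>V. f v \<subseteq> nbhd E v \<and> f v \<noteq> {}"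
  proof
    fix v assume v: "v \<in> V"
    have fin: "finite (nbhd E v)"
      using sg unfolding simple_graph_def nbhd_def
      by (metis (no_types, lifting) mem_Collect_eq rev_finite_subset subsetI)
    obtain u where "E v u" using nz v by blast
    then have "nbhd E v \<noteq> {}" unfolding nbhd_def by auto
    then have "deg E v \<ge> 1" unfolding deg_def using fin
      by (simp add: Suc_leI card_gt_0_iff)
    then consider "deg E v \<ge> 2" | "deg E v = 1" by linarith
    then show "f v \<subseteq> nbhd E v \<and> f v \<noteq> {}"
    proof cases
      case 1 then show ?thesis using f1 v unfolding nbhd_def by fastforce
    next
      case 2 then show ?thesis using f2 v by fastforce
    qed
  qed
  then show ?thesis using f3 by blast
qed

lemma beta_alpha:
  assumes fin: "finite V" and sub: "\<forall>e\<in>F. e \<subseteq> V \<and> e \<noteq> {}"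
  shows "beta V F = card V - alpha V F"
proof -
  let ?A = "{card I | I. independent_set V F I}"
  let ?B = "{card C | C. vertex_cover V F C}"
  have finA: "finite ?A"
  proof (rule finite_subset[of _ "{..card V}"])
    show "?A \<subseteq> {..card V}" using fin unfolding independent_set_def
      by (auto intro: card_mono)
  qed auto
  have finB: "finite ?B"
  proof (rule finite_subset[of _ "{..card V}"])
    show "?B \<subseteq> {..card V}" using fin unfolding vertex_cover_def
      by (auto intro: card_mono)
  qed auto
  have i0: "independent_set V F {}" using sub unfolding independent_set_def by auto
  have c0: "vertex_cover V F V" using sub unfolding vertex_cover_def by auto
  have "alpha V F \<in> ?A" unfolding alpha_def
    using finA i0 by (intro Max_in) auto
  then obtain I where I: "independent_set V F I" "card I = alpha V F" by auto
  have "beta V F \<in> ?B" unfolding beta_def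
    using finB c0 by (intro Min_in) auto
  then obtain C where C: "vertex_cover V F C" "card C = beta V F" by auto
  have "vertex_cover V F (V - I)" using I(1) sub unfolding independent_set_def vertex_cover_def
    by blast
  then have "beta V F \<le> card (V - I)" unfolding beta_def using finB by (intro Min_le) auto
  also have "card (V - I) = card V - alpha V F" using I fin unfolding independent_set_def
    by (metis card_Diff_subset finite_subset)
  finally have 1: "beta V F \<le> card V - alpha V F" .
  have "independent_set V F (V - C)" using C(1) sub unfolding independent_set_def vertex_cover_def
    by blast
  then have "card (V - C) \<le> alpha V F" unfolding alpha_def using finA by (intro Max_ge) auto
  moreover have "card (V - C) = card V - beta V F" using C fin unfolding vertex_cover_def
    by (metis card_Diff_subset finite_subset)
  ultimately have 2: "card V - alpha V F \<le> beta V F"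
    using C fin unfolding vertex_cover_def by (metis card_mono diff_diff_cancel diff_le_mono2)
  show ?thesis using 1 2 by linarith
qed

lemma gamma_facts:
  assumes sg: "simple_graph V E" and nz: "\<forall>v\<in>V. \<exists>u. E v u"
  shows "finite {card S | S. total_dominating_set V E S}"
    and "\<exists>S. total_dominating_set V E S \<and> card S = gamma_t V E"
    and "\<And>S. total_dominating_set V E S \<Longrightarrow> gamma_t V E \<le> card S"
proof -
  have fin: "finite V" using sg unfolding simple_graph_def by auto
  show finA: "finite {card S | S. total_dominating_set V E S}"
  proof (rule finite_subset[of _ "{..card V}"])
    show "{card S | S. total_dominating_set V E S} \<subseteq> {..card V}"
      using fin unfolding total_dominating_set_def by (auto intro: card_mono)
  qed auto
  have "total_dominating_set V E V" using nz sg unfolding total_dominating_set_def simple_graph_def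
    by blast
  then have "gamma_t V E \<in> {card S | S. total_dominating_set V E S}" unfolding gamma_t_def
    using finA by (intro Min_in) auto
  then show "\<exists>S. total_dominating_set V E S \<and> card S = gamma_t V E" by auto
  show "\<And>S. total_dominating_set V E S \<Longrightarrow> gamma_t V E \<le> card S"
    unfolding gamma_t_def using finA by (intro Min_le) auto
qed

lemma gamma_le_beta:
  assumes sg: "simple_graph V E" and nz: "\<forall>v\<in>V. \<exists>u. E v u"
    and F: "F \<in> derived_graphs V E"
  shows "gamma_t V E \<le> beta V F"
proof -
  obtain f where f: "F = f ` V" "\<forall>v\<in>V. f v \<subseteq> nbhd E v \<and> f v \<noteq> {}"
    using derived_props[OF sg nz F] by blast
  have fin: "finite V" using sg unfolding simple_graph_def by auto
  have sub: "\<forall>e\<in>F. e \<subseteq> V \<and> e \<noteq> {}" using f sg unfolding simple_graph_def nbhd_def by blast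
  let ?B = "{card C | C. vertex_cover V F C}"
  have finB: "finite ?B"
  proof (rule finite_subset[of _ "{..card V}"])
    show "?B \<subseteq> {..card V}" using fin unfolding vertex_cover_def
      by (auto intro: card_mono)
  qed auto
  have c0: "vertex_cover V F V" using sub unfolding vertex_cover_def by auto
  have "beta V F \<in> ?B" unfolding beta_def
    using finB c0 by (intro Min_in) auto
  then obtain C where C: "vertex_cover V F C" "card C = beta V F" by auto
  have "total_dominating_set V E C"
    unfolding total_dominating_set_def
  proof
    show "C \<subseteq> V" using C unfolding vertex_cover_def by auto
    show "\<forall>v\<in>V. \<exists>u\<in>C. E v u"
    proof
      fix v assume v: "v \<in> V"
      then have "f v \<in> F" using f by auto
      then have "f v \<inter> C \<noteq> {}" using C unfolding vertex_cover_def by auto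
      then show "\<exists>u\<in>C. E v u" using f(2) v unfolding nbhd_def by blast
    qed
  qed
  then show ?thesis using gamma_facts(3)[OF sg nz] C by fastforce
qed

lemma exists_beta_le_gamma:
  assumes sg: "simple_graph V E" and nz: "\<forall>v\<in>V. \<exists>u. E v u"
  shows "\<exists>F\<in>derived_graphs V E. beta V F \<le> gamma_t V E"
proof -
  obtain S where S: "total_dominating_set V E S" "card S = gamma_t V E"
    using gamma_facts(2)[OF sg nz] by blast
  define s where "s v = (SOME u. u \<in> S \<and> E v u)" for v
  have s: "\<forall>v\<in>V. s v \<in> S \<and> E v (s v)"
  proof
    fix v assume "v \<in> V"
    then have "\<exists>u. u \<in> S \<and> E v u" using S unfolding total_dominating_set_def by blast
    then show "s v \<in> S \<and> E v (s v)" unfolding s_def by (rule someI_ex)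
  qed
  define f where "f v = (if deg E v \<ge> 2 then {s v, SOME w. E v w \<and> w \<noteq> s v} else {s v})" for v
  have d1: "\<forall>v\<in>V. deg E v \<ge> 2 \<longrightarrow> (\<exists>u w. u \<noteq> w \<and> E v u \<and> E v w \<and> f v = {u, w})"
  proof (intro ballI impI)
    fix v assume v: "v \<in> V" and d: "deg E v \<ge> 2"
    have "\<not> nbhd E v \<subseteq> {s v}"
    proof
      assume "nbhd E v \<subseteq> {s v}"
      then have "card (nbhd E v) \<le> 1" using card_mono[of "{s v}" "nbhd E v"] by simp
      then show False using d unfolding deg_def by linarith
    qed
    then have "\<exists>w. E v w \<and> w \<noteq> s v" unfolding nbhd_def by auto
    then have w: "E v (SOME w. E v w \<and> w \<noteq> s v) \<and> (SOME w. E v w \<and> w \<noteq> s v) \<noteq> s v"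
      by (rule someI_ex)
    show "\<exists>u w. u \<noteq> w \<and> E v u \<and> E v w \<and> f v = {u, w}"
      using w s v d unfolding f_def by (metis)
  qed
  have d2: "\<forall>v\<in>V. deg E v = 1 \<longrightarrow> (\<exists>u. nbhd E v = {u} \<and> f v = {u})"
  proof (intro ballI impI)
    fix v assume v: "v \<in> V" and d: "deg E v = 1"
    then obtain u where u: "nbhd E v = {u}" unfolding deg_def using card_1_singletonE by blast
    have "s v \<in> nbhd E v" using s v unfolding nbhd_def by auto
    then have "s v = u" using u by auto
    then show "\<exists>u. nbhd E v = {u} \<and> f v = {u}" using u d unfolding f_def by auto
  qed
  have Fd: "f ` V \<in> derived_graphs V E" unfolding derived_graphs_def using d1 d2 by blast
  have fin: "finite V" using sg unfolding simple_graph_def by auto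
  have vc: "vertex_cover V (f ` V) S" using S s unfolding vertex_cover_def total_dominating_set_def f_def
    by auto
  have finB: "finite {card C | C. vertex_cover V (f ` V) C}"
  proof (rule finite_subset[of _ "{..card V}"])
    show "{card C | C. vertex_cover V (f ` V) C} \<subseteq> {..card V}" using fin unfolding vertex_cover_def
      by (auto intro: card_mono)
  qed auto
  have "beta V (f ` V) \<le> card S" unfolding beta_def using finB vc by (intro Min_le) auto
  then show ?thesis using Fd S by auto
qed

theorem theorem2p2:
  fixes V :: "'a set" and E :: "'a \<Rightarrow> 'a \<Rightarrow> bool" and Fmin :: "'a set set"
  assumes "simple_graph V E"
    and "\<forall>v\<in>V. \<exists>u. E v u"
    and "Fmin \<in> derived_graphs V E"
    and "\<forall>F\<in>derived_graphs V E. card V - alpha V Fmin \<le> card V - alpha V F"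
  shows "gamma_t V E = card V - alpha V Fmin \<and> card V - alpha V Fmin = beta V Fmin"
proof -
  have fin: "finite V" using assms(1) unfolding simple_graph_def by auto
  have ba: "\<And>F. F \<in> derived_graphs V E \<Longrightarrow> beta V F = card V - alpha V F"
  proof -
    fix F assume F: "F \<in> derived_graphs V E"
    obtain f where f: "F = f ` V" "\<forall>v\<in>V. f v \<subseteq> nbhd E v \<and> f v \<noteq> {}"
      using derived_props[OF assms(1,2) F] by blast
    have sub: "\<forall>e\<in>F. e \<subseteq> V \<and> e \<noteq> {}" using f assms(1) unfolding simple_graph_def nbhd_def by blast
    show "beta V F = card V - alpha V F" by (rule beta_alpha[OF fin sub])
  qed
  obtain F where F: "F \<in> derived_graphs V E" "beta V F \<le> gamma_t V E"
    using exists_beta_le_gamma[OF assms(1,2)] by blast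
  have 1: "gamma_t V E \<le> beta V Fmin" by (rule gamma_le_beta[OF assms(1,2,3)])
  have "beta V Fmin \<le> beta V F" using ba[OF F(1)] ba[OF assms(3)] assms(4) F(1) by auto
  then show ?thesis using 1 F(2) ba[OF assms(3)] by linarith
qed

end
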